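(* Let $\mathbb{A}$ be a Boolean algebra with the Grothendieck property and $(\mathbb{B},\mu)$ a metric Boolean algebra. If a sequence $(\varphi_n)$ in $\mathcal{H}(\mathbb{A},\mathbb{B})$ converges pointwise metric to $\varphi\in\mathcal{H}(\mathbb{A},\mathbb{B})$, then $(\varphi_n)$ converges pointwise Borel metric to $\varphi$.
   Context: $\mathbb{A}$ has the Grothendieck property if every weak* convergent sequence of (signed) Radon measures on the Stone space $St(\mathbb{A})$ is weakly convergent (weak* with respect to $C(St(\mathbb{A}))$, weak in $C(St(\mathbb{A}))^*$). A metric Boolean algebra $(\mathbb{B},\mu)$ is a Boolean algebra with a strictly positive finitely additive probability measure $\mu$; $d_\mu(A,B)=\mu(A\triangle B)$. $\mathcal{H}(\mathbb{A},\mathbb{B})$ is the set of homomorphisms $\mathbb{A}\to\mathbb{B}$. Algebras are identified with the clopen algebras of their Stone spaces; $\widehat{\mu}$ is the Radon extension of $\mu$ to $St(\mathbb{B})$; $f_\varphi\colon St(\mathbb{B})\to St(\mathbb{A})$, $f_\varphi(x)=\varphi^{-1}[x]$. Pointwise metric convergence: $d_\mu(\varphi_n(A),\varphi(A))\to0$ for each $A\in\mathbb{A}$. Pointwise Borel metric convergence: $\widehat{\mu}(f_{\varphi_n}^{-1}[B]\triangle f_\varphi^{-1}[B])\to0$ for every Borel $B\subseteq St(\mathbb{A})$. *)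

theory Defs
  imports "HOL-Analysis.Analysis"
begin

definition ultrafilter :: "'a::boolean_algebra set \<Rightarrow> bool" where
  "ultrafilter U \<longleftrightarrow> top \<in> U \<and> bot \<notin> U \<and>
     (\<forall>a\<in>U. \<forall>b\<in>U. inf a b \<in> U) \<and>
     (\<forall>a b. a \<in> U \<and> a \<le> b \<longrightarrow> b \<in> U) \<and>
     (\<forall>a. a \<in> U \<or> - a \<in> U)"

definition St :: "'a::boolean_algebra itself \<Rightarrow> 'a set set" where
  "St _ = {U. ultrafilter U}"

definition clopen_of :: "'a::boolean_algebra \<Rightarrow> 'a set set" where
  "clopen_of a = {U. ultrafilter U \<and> a \<in> U}"

definition stone_top :: "'a::boolean_algebra itself \<Rightarrow> 'a set topology" where
  "stone_top _ = topology_generated_by (range (clopen_of :: 'a \<Rightarrow> 'a set set))"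

definition borel_sets :: "'x topology \<Rightarrow> 'x set set" where
  "borel_sets X = sigma_sets (topspace X) {U. openin X U}"

definition radon_measure :: "'x topology \<Rightarrow> 'x measure \<Rightarrow> bool" where
  "radon_measure X M \<longleftrightarrow> space M = topspace X \<and> sets M = borel_sets X \<and>
     finite_measure M \<and>
     (\<forall>B \<in> borel_sets X. emeasure M B = (SUP K \<in> {K. compactin X K \<and> K \<subseteq> B}. emeasure M K))"

text \<open>Signed Radon measures, as real-valued set functions on Borel sets
  (set to 0 outside the Borel sets): differences of two finite Radon measures.\<close>
definition signed_radon :: "'x topology \<Rightarrow> ('x set \<Rightarrow> real) \<Rightarrow> bool" where
  "signed_radon X \<nu> \<longleftrightarrow> (\<exists>M1 M2. radon_measure X M1 \<and> radon_measure X M2 \<and>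
     (\<forall>B. \<nu> B = (if B \<in> borel_sets X then measure M1 B - measure M2 B else 0)))"

definition radon_decomp :: "'x topology \<Rightarrow> ('x set \<Rightarrow> real) \<Rightarrow> 'x measure \<times> 'x measure" where
  "radon_decomp X \<nu> = (SOME (M1, M2). radon_measure X M1 \<and> radon_measure X M2 \<and>
     (\<forall>B. \<nu> B = (if B \<in> borel_sets X then measure M1 B - measure M2 B else 0)))"

text \<open>Integral of a (continuous) function against a signed Radon measure
  (independent of the chosen decomposition).\<close>
definition signed_integral :: "'x topology \<Rightarrow> ('x set \<Rightarrow> real) \<Rightarrow> ('x \<Rightarrow> real) \<Rightarrow> real" where
  "signed_integral X \<nu> f = (integral\<^sup>L (fst (radon_decomp X \<nu>)) f - integral\<^sup>L (snd (radon_decomp X \<nu>)) f)"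

definition tv_norm :: "'x topology \<Rightarrow> ('x set \<Rightarrow> real) \<Rightarrow> real" where
  "tv_norm X \<nu> = (SUP P \<in> {P. finite P \<and> P \<subseteq> borel_sets X \<and> disjoint P}. \<Sum>B\<in>P. \<bar>\<nu> B\<bar>)"

text \<open>Bounded linear functionals on the Banach space of signed Radon measures
  (i.e. elements of the dual of C(X)^*, via the Riesz representation).\<close>
definition bounded_functional :: "'x topology \<Rightarrow> (('x set \<Rightarrow> real) \<Rightarrow> real) \<Rightarrow> bool" where
  "bounded_functional X \<Lambda> \<longleftrightarrow>
     (\<forall>\<nu> \<nu>'. signed_radon X \<nu> \<and> signed_radon X \<nu>' \<longrightarrow> \<Lambda> (\<lambda>B. \<nu> B + \<nu>' B) = \<Lambda> \<nu> + \<Lambda> \<nu>') \<and>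
     (\<forall>\<nu> c. signed_radon X \<nu> \<longrightarrow> \<Lambda> (\<lambda>B. c * \<nu> B) = c * \<Lambda> \<nu>) \<and>
     (\<exists>C. \<forall>\<nu>. signed_radon X \<nu> \<longrightarrow> \<bar>\<Lambda> \<nu>\<bar> \<le> C * tv_norm X \<nu>)"

definition weak_star_conv :: "'x topology \<Rightarrow> (nat \<Rightarrow> 'x set \<Rightarrow> real) \<Rightarrow> ('x set \<Rightarrow> real) \<Rightarrow> bool" where
  "weak_star_conv X \<nu>s \<nu> \<longleftrightarrow> (\<forall>f. continuous_map X euclideanreal f \<longrightarrow>
      (\<lambda>n. signed_integral X (\<nu>s n) f) \<longlonglongrightarrow> signed_integral X \<nu> f)"

definition weak_conv :: "'x topology \<Rightarrow> (nat \<Rightarrow> 'x set \<Rightarrow> real) \<Rightarrow> ('x set \<Rightarrow> real) \<Rightarrow> bool" where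
  "weak_conv X \<nu>s \<nu> \<longleftrightarrow> (\<forall>\<Lambda>. bounded_functional X \<Lambda> \<longrightarrow> (\<lambda>n. \<Lambda> (\<nu>s n)) \<longlonglongrightarrow> \<Lambda> \<nu>)"

definition grothendieck_property :: "'a::boolean_algebra itself \<Rightarrow> bool" where
  "grothendieck_property A \<longleftrightarrow> (\<forall>\<nu>s \<nu>. (\<forall>n. signed_radon (stone_top A) (\<nu>s n)) \<and>
      signed_radon (stone_top A) \<nu> \<and> weak_star_conv (stone_top A) \<nu>s \<nu> \<longrightarrow>
      weak_conv (stone_top A) \<nu>s \<nu>)"

definition metric_ba :: "('b::boolean_algebra \<Rightarrow> real) \<Rightarrow> bool" where
  "metric_ba \<mu> \<longleftrightarrow> \<mu> top = 1 \<and> (\<forall>a. a \<noteq> bot \<longrightarrow> \<mu> a > 0) \<and> \<mu> bot = 0 \<and>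
     (\<forall>a b. inf a b = bot \<longrightarrow> \<mu> (sup a b) = \<mu> a + \<mu> b)"

definition sym_diff :: "'a::boolean_algebra \<Rightarrow> 'a \<Rightarrow> 'a" where
  "sym_diff a b = sup (a - b) (b - a)"

definition d_metric :: "('b::boolean_algebra \<Rightarrow> real) \<Rightarrow> 'b \<Rightarrow> 'b \<Rightarrow> real" where
  "d_metric \<mu> a b = \<mu> (sym_diff a b)"

definition ba_hom :: "('a::boolean_algebra \<Rightarrow> 'b::boolean_algebra) \<Rightarrow> bool" where
  "ba_hom \<phi> \<longleftrightarrow> \<phi> bot = bot \<and> \<phi> top = top \<and> (\<forall>a b. \<phi> (sup a b) = sup (\<phi> a) (\<phi> b)) \<and>
     (\<forall>a b. \<phi> (inf a b) = inf (\<phi> a) (\<phi> b)) \<and> (\<forall>a. \<phi> (- a) = - \<phi> a)"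

definition stone_map :: "('a::boolean_algebra \<Rightarrow> 'b::boolean_algebra) \<Rightarrow> 'b set \<Rightarrow> 'a set" where
  "stone_map \<phi> x = \<phi> -` x"

definition radon_extension :: "('b::boolean_algebra \<Rightarrow> real) \<Rightarrow> 'b set measure \<Rightarrow> bool" where
  "radon_extension \<mu> M \<longleftrightarrow> radon_measure (stone_top TYPE('b)) M \<and>
     (\<forall>b. measure M (clopen_of b) = \<mu> b)"

definition pointwise_metric_conv ::
  "('b::boolean_algebra \<Rightarrow> real) \<Rightarrow> (nat \<Rightarrow> 'a::boolean_algebra \<Rightarrow> 'b) \<Rightarrow> ('a \<Rightarrow> 'b) \<Rightarrow> bool" where
  "pointwise_metric_conv \<mu> \<phi>s \<phi> \<longleftrightarrow> (\<forall>a. (\<lambda>n. d_metric \<mu> (\<phi>s n a) (\<phi> a)) \<longlonglongrightarrow> 0)"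

definition pointwise_borel_metric_conv ::
  "'b set measure \<Rightarrow> (nat \<Rightarrow> 'a::boolean_algebra \<Rightarrow> 'b::boolean_algebra) \<Rightarrow> ('a \<Rightarrow> 'b) \<Rightarrow> bool" where
  "pointwise_borel_metric_conv M \<phi>s \<phi> \<longleftrightarrow>
     (\<forall>B \<in> borel_sets (stone_top TYPE('a)).
        (\<lambda>n. measure M (let P = stone_map (\<phi>s n) -` B \<inter> St TYPE('b); Q = stone_map \<phi> -` B \<inter> St TYPE('b) in (P - Q) \<union> (Q - P)))
          \<longlonglongrightarrow> 0)"

end

theory Submission
  imports Defs
begin


lemma uf_top: "ultrafilter U \<Longrightarrow> top \<in> U" by (simp add: ultrafilter_def)
lemma uf_bot: "ultrafilter U \<Longrightarrow> bot \<notin> U" by (simp add: ultrafilter_def)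
lemma uf_inf: "ultrafilter U \<Longrightarrow> inf a b \<in> U \<longleftrightarrow> a \<in> U \<and> b \<in> U"
  unfolding ultrafilter_def by (metis inf.cobounded1 inf.cobounded2)
lemma uf_mono: "ultrafilter U \<Longrightarrow> a \<in> U \<Longrightarrow> a \<le> b \<Longrightarrow> b \<in> U"
  unfolding ultrafilter_def by blast
lemma uf_compl: "ultrafilter (U::'a::boolean_algebra set) \<Longrightarrow> - a \<in> U \<longleftrightarrow> a \<notin> U"
  unfolding ultrafilter_def by (metis inf_compl_bot)
lemma uf_sup: "ultrafilter (U::'a::boolean_algebra set) \<Longrightarrow> sup a b \<in> U \<longleftrightarrow> a \<in> U \<or> b \<in> U"
  by (metis compl_sup uf_compl uf_inf)
lemma uf_symdiff:
  assumes "ultrafilter (U::'a::boolean_algebra set)"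
  shows "sym_diff a b \<in> U \<longleftrightarrow> \<not> (a \<in> U \<longleftrightarrow> b \<in> U)"
proof -
  have "sym_diff a b \<in> U \<longleftrightarrow> (a \<in> U \<and> -b \<in> U) \<or> (b \<in> U \<and> -a \<in> U)"
    using uf_sup[OF assms] uf_inf[OF assms] by (simp add: sym_diff_def diff_eq)
  then show ?thesis using uf_compl[OF assms] by blast
qed

lemma St_eq: "St TYPE('a::boolean_algebra) = {U. ultrafilter U}" by (simp add: St_def)

lemma topspace_stone: "topspace (stone_top TYPE('a::boolean_algebra)) = {U. ultrafilter U}"
  unfolding stone_top_def topology_generated_by_topspace
  by (auto simp: clopen_of_def intro: uf_top)

lemma openin_clopen: "openin (stone_top TYPE('a::boolean_algebra)) (clopen_of a)"
  unfolding stone_top_def by (rule topology_generated_by_Basis) simp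

lemma clopen_inf: "clopen_of (inf a b) = clopen_of a \<inter> clopen_of b"
  by (auto simp: clopen_of_def uf_inf)

lemma stone_basis:
  assumes "openin (stone_top TYPE('a::boolean_algebra)) S" "x \<in> S"
  shows "\<exists>a. x \<in> clopen_of a \<and> clopen_of a \<subseteq> S"
proof -
  have "generate_topology_on (range (clopen_of :: 'a \<Rightarrow> _)) S"
    using assms(1) unfolding stone_top_def by (rule openin_topology_generated_by)
  then show ?thesis using assms(2)
  proof (induction arbitrary: x)
    case Empty then show ?case by simp
  next
    case (Int a b)
    then obtain p q where "x \<in> clopen_of p" "clopen_of p \<subseteq> a" "x \<in> clopen_of q" "clopen_of q \<subseteq> b"
      by blast
    then show ?case by (intro exI[of _ "inf p q"]) (auto simp: clopen_inf)
  next
    case (UN K)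
    then obtain k where "k \<in> K" "x \<in> k" by blast
    with UN show ?case by blast
  next
    case (Basis s) then show ?case by blast
  qed
qed

lemma hausdorff_stone: "Hausdorff_space (stone_top TYPE('a::boolean_algebra))"
  unfolding Hausdorff_space_def topspace_stone
proof (intro allI impI, elim conjE)
  fix x y :: "'a set" assume x: "x \<in> Collect ultrafilter" and y: "y \<in> Collect ultrafilter" and "x \<noteq> y"
  then obtain a where a: "(a \<in> x \<and> a \<notin> y) \<or> (a \<in> y \<and> a \<notin> x)" by blast
  have d: "disjnt (clopen_of a) (clopen_of (-a))"
    by (auto simp: disjnt_def clopen_of_def uf_compl)
  show "\<exists>U V. openin (stone_top TYPE('a)) U \<and> openin (stone_top TYPE('a)) V \<and> x \<in> U \<and> y \<in> V \<and> disjnt U V"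
    using a
  proof
    assume "a \<in> x \<and> a \<notin> y"
    then have "x \<in> clopen_of a" "y \<in> clopen_of (-a)" using x y by (auto simp: clopen_of_def uf_compl)
    then show ?thesis using d openin_clopen by blast
  next
    assume "a \<in> y \<and> a \<notin> x"
    then have "x \<in> clopen_of (-a)" "y \<in> clopen_of a" using x y by (auto simp: clopen_of_def uf_compl)
    then show ?thesis using d openin_clopen disjnt_sym by blast
  qed
qed

definition "isfilter (F::'a::boolean_algebra set) \<longleftrightarrow> top \<in> F \<and> bot \<notin> F \<and>
     (\<forall>a\<in>F. \<forall>b\<in>F. inf a b \<in> F) \<and> (\<forall>a b. a \<in> F \<and> a \<le> b \<longrightarrow> b \<in> F)"

lemma isfilter_inf: "isfilter F \<Longrightarrow> a \<in> F \<Longrightarrow> b \<in> F \<Longrightarrow> inf a b \<in> F"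
  by (simp add: isfilter_def)
lemma isfilter_mono: "isfilter F \<Longrightarrow> a \<in> F \<Longrightarrow> a \<le> b \<Longrightarrow> b \<in> F"
  unfolding isfilter_def by (elim conjE allE impE) auto

lemma maximal_filter_uf:
  assumes "isfilter M" and max: "\<And>F. isfilter F \<Longrightarrow> M \<subseteq> F \<Longrightarrow> F = M"
  shows "ultrafilter M"
proof -
  have "a \<in> M \<or> - a \<in> M" for a
  proof (rule ccontr)
    assume na: "\<not> (a \<in> M \<or> - a \<in> M)"
    define M' where "M' = {c. \<exists>m\<in>M. inf m a \<le> c}"
    show False
    proof (cases "bot \<in> M'")
      case True
      then obtain m where "m \<in> M" "inf m a \<le> bot" by (auto simp: M'_def)
      then have "m \<le> - a" by (simp add: inf_shunt bot_unique)
      then show False using na \<open>m \<in> M\<close> assms(1) by (auto simp: isfilter_def)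
    next
      case False
      have "isfilter M'" unfolding isfilter_def
      proof (intro conjI ballI allI impI)
        show "top \<in> M'" using assms(1) by (auto simp: M'_def isfilter_def)
        show "bot \<notin> M'" by fact
        fix p q assume "p \<in> M'" "q \<in> M'"
        then obtain m1 m2 where "m1 \<in> M" "inf m1 a \<le> p" "m2 \<in> M" "inf m2 a \<le> q" by (auto simp: M'_def)
        moreover have "inf (inf m1 m2) a \<le> inf m1 a" "inf (inf m1 m2) a \<le> inf m2 a"
          by (simp_all add: inf_mono le_infI1 le_infI2)
        moreover have "inf (inf m1 m2) a \<le> inf p q" using calculation
          by (meson le_inf_iff order_trans)
        ultimately show "inf p q \<in> M'" using assms(1) unfolding M'_def isfilter_def by blast
      next
        fix p q assume "p \<in> M' \<and> p \<le> q" then show "q \<in> M'" by (auto simp: M'_def intro: order_trans)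
      qed
      moreover have "M \<subseteq> M'"
      proof
        fix x assume "x \<in> M" then show "x \<in> M'" unfolding M'_def using inf_le1[of x a] by blast
      qed
      moreover have "a \<in> M'" using assms(1) by (auto simp: M'_def isfilter_def intro!: bexI[of _ top])
      ultimately show False using max na by blast
    qed
  qed
  then show ?thesis using assms(1) by (auto simp: ultrafilter_def isfilter_def)
qed

lemma uf_extend:
  assumes "isfilter G"
  shows "\<exists>U. ultrafilter U \<and> G \<subseteq> U"
proof -
  let ?S = "{F. isfilter F \<and> G \<subseteq> F}"
  have "\<exists>M\<in>?S. \<forall>X\<in>?S. M \<subseteq> X \<longrightarrow> X = M"
  proof (rule subset_Zorn_nonempty)
    show "?S \<noteq> {}" using assms by blast
    fix C assume C: "C \<noteq> {}" "subset.chain ?S C"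
    show "\<Union>C \<in> ?S" unfolding isfilter_def mem_Collect_eq
    proof (intro conjI ballI allI impI)
      show "top \<in> \<Union>C" using C by (auto simp: subset.chain_def isfilter_def)
      show "bot \<notin> \<Union>C" using C by (auto simp: subset.chain_def isfilter_def)
      obtain F0 where "F0 \<in> C" using C by blast
      then show "G \<subseteq> \<Union>C" using C unfolding subset.chain_def by blast
      fix a b assume "a \<in> \<Union>C" "b \<in> \<Union>C"
      then obtain F1 F2 where "F1 \<in> C" "F2 \<in> C" "a \<in> F1" "b \<in> F2" by blast
      note FF = this
      have "F1 \<subset> F2 \<or> F1 = F2 \<or> F2 \<subset> F1 \<or> F2 = F1" using C FF by (simp add: subset.chain_def)
      then have "F1 \<subseteq> F2 \<or> F2 \<subseteq> F1" by blast
      then obtain F where F: "F \<in> C" "a \<in> F" "b \<in> F" using FF by blast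
      then have "isfilter F" using C by (auto simp: subset.chain_def)
      then have "inf a b \<in> F" using F isfilter_inf by blast
      then show "inf a b \<in> \<Union>C" using F by blast
    next
      fix a b assume ab: "a \<in> \<Union>C \<and> a \<le> b"
      then obtain F where F: "F \<in> C" "a \<in> F" by blast
      then have "isfilter F" using C by (auto simp: subset.chain_def)
      then have "b \<in> F" using F ab isfilter_mono by blast
      then show "b \<in> \<Union>C" using F by blast
    qed
  qed
  then obtain M where M0: "M \<in> ?S" "\<forall>X\<in>?S. M \<subseteq> X \<longrightarrow> X = M" by (rule bexE)
  then have M: "isfilter M" "G \<subseteq> M" by auto
  have "ultrafilter M"
  proof (rule maximal_filter_uf[OF M(1)])
    fix F assume "isfilter F" "M \<subseteq> F"
    then show "F = M" using M0(2) M(2) by auto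
  qed
  then show ?thesis using M by blast
qed

lemma stone_cover:
  fixes A :: "'a::boolean_algebra set"
  assumes cov: "\<And>x. ultrafilter x \<Longrightarrow> \<exists>a\<in>A. a \<in> x"
  shows "\<exists>F\<subseteq>A. finite F \<and> (\<forall>x. ultrafilter x \<longrightarrow> (\<exists>a\<in>F. a \<in> x))"
proof (rule ccontr)
  assume nc: "\<not> ?thesis"
  have nc': "\<exists>x. ultrafilter x \<and> (\<forall>a\<in>F. a \<notin> x)" if "F \<subseteq> A" "finite F" for F
    using nc that by blast
  define G where "G = {c. \<exists>F\<subseteq>A. finite F \<and> (\<forall>U. ultrafilter U \<longrightarrow> (\<forall>a\<in>F. a \<notin> U) \<longrightarrow> c \<in> U)}"
  have "isfilter G" unfolding isfilter_def
  proof (intro conjI ballI allI impI)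
    show "top \<in> G" unfolding G_def by (auto intro: uf_top)
    show "bot \<notin> G"
    proof
      assume "bot \<in> G"
      then obtain F where "F \<subseteq> A" "finite F" "\<forall>U. ultrafilter U \<longrightarrow> (\<forall>a\<in>F. a \<notin> U) \<longrightarrow> bot \<in> U"
        unfolding G_def by blast
      note FF = this
      obtain x where "ultrafilter x" "\<forall>a\<in>F. a \<notin> x" using nc'[OF FF(1,2)] by blast
      then show False using uf_bot FF(3) by blast
    qed
    fix a b assume "a \<in> G" "b \<in> G"
    from \<open>a \<in> G\<close> obtain F1 where F1: "F1 \<subseteq> A" "finite F1" "\<forall>U. ultrafilter U \<longrightarrow> (\<forall>a\<in>F1. a \<notin> U) \<longrightarrow> a \<in> U"
      unfolding G_def by blast
    from \<open>b \<in> G\<close> obtain F2 where F2: "F2 \<subseteq> A" "finite F2" "\<forall>U. ultrafilter U \<longrightarrow> (\<forall>a\<in>F2. a \<notin> U) \<longrightarrow> b \<in> U"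
      unfolding G_def by blast
    show "inf a b \<in> G" unfolding G_def mem_Collect_eq
    proof (intro exI[of _ "F1 \<union> F2"] conjI allI impI)
      show "F1 \<union> F2 \<subseteq> A" "finite (F1 \<union> F2)" using F1 F2 by auto
      fix U :: "'a set" assume U: "ultrafilter U" "\<forall>a\<in>F1 \<union> F2. a \<notin> U"
      then have "a \<in> U" "b \<in> U" using F1(3) F2(3) by auto
      then show "inf a b \<in> U" using uf_inf[OF U(1)] by simp
    qed
  next
    fix a b assume ab: "a \<in> G \<and> a \<le> b"
    then obtain F where F: "F \<subseteq> A" "finite F" "\<forall>U. ultrafilter U \<longrightarrow> (\<forall>a\<in>F. a \<notin> U) \<longrightarrow> a \<in> U"
      unfolding G_def by blast
    show "b \<in> G" unfolding G_def mem_Collect_eq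
    proof (intro exI[of _ F] conjI allI impI)
      show "F \<subseteq> A" "finite F" using F by auto
      fix U :: "'a set" assume U: "ultrafilter U" "\<forall>a\<in>F. a \<notin> U"
      then have "a \<in> U" using F(3) by auto
      then show "b \<in> U" using uf_mono[OF U(1)] ab by blast
    qed
  qed
  then obtain U where U: "ultrafilter U" "G \<subseteq> U" using uf_extend by blast
  then obtain a where "a \<in> A" "a \<in> U" using cov by blast
  moreover have "- a \<in> G" unfolding G_def using \<open>a \<in> A\<close>
    by (intro CollectI exI[of _ "{a}"]) (auto simp: uf_compl)
  ultimately show False using U uf_compl by blast
qed



definition borelM :: "'x topology \<Rightarrow> 'x measure" where
  "borelM X = sigma (topspace X) {U. openin X U}"

lemma space_borelM[simp]: "space (borelM X) = topspace X"
  unfolding borelM_def by (rule space_measure_of) (auto dest: openin_subset)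
lemma sets_borelM[simp]: "sets (borelM X) = borel_sets X"
  unfolding borelM_def borel_sets_def by (rule sets_measure_of) (auto dest: openin_subset)

lemma open_in_borel: "openin X U \<Longrightarrow> U \<in> borel_sets X"
  unfolding borel_sets_def by (rule sigma_sets.Basic) simp

lemma closed_in_borel: "closedin X U \<Longrightarrow> U \<in> borel_sets X"
proof -
  assume "closedin X U"
  then have "openin X (topspace X - U)" "U \<subseteq> topspace X" by (auto simp: closedin_def)
  then have "topspace X - (topspace X - U) \<in> borel_sets X"
    unfolding borel_sets_def by (intro sigma_sets.Compl sigma_sets.Basic) auto
  then show ?thesis using \<open>U \<subseteq> topspace X\<close> by (simp add: Diff_Diff_Int Int_absorb1)
qed

lemma cont_measurable:
  assumes "continuous_map X Y f" "sets M = borel_sets X" "space M = topspace X"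
  shows "f \<in> measurable M (borelM Y)"
  unfolding borelM_def
proof (rule measurable_measure_of)
  show "{U. openin Y U} \<subseteq> Pow (topspace Y)" by (auto dest: openin_subset)
  show "f \<in> space M \<rightarrow> topspace Y" using assms by (auto simp: continuous_map_def)
  fix U assume "U \<in> {U. openin Y U}"
  then have "openin X {x \<in> topspace X. f x \<in> U}" using assms(1) by (auto simp: continuous_map_def)
  moreover have "f -` U \<inter> space M = {x \<in> topspace X. f x \<in> U}" using assms by auto
  ultimately show "f -` U \<inter> space M \<in> sets M" using assms open_in_borel by metis
qed

lemma cont_borel_measurable:
  assumes "continuous_map X euclideanreal g" "sets M = borel_sets X" "space M = topspace X"
  shows "g \<in> borel_measurable M"
proof (rule borel_measurableI)
  fix S :: "real set" assume "open S"
  then have "openin X {x \<in> topspace X. g x \<in> S}" using assms(1) by (auto simp: continuous_map_def)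
  moreover have "g -` S \<inter> space M = {x \<in> topspace X. g x \<in> S}" using assms by auto
  ultimately show "g -` S \<inter> space M \<in> sets M" using assms open_in_borel by metis
qed

lemma ba_hom_mono: "ba_hom \<phi> \<Longrightarrow> a \<le> b \<Longrightarrow> \<phi> a \<le> \<phi> b"
  unfolding ba_hom_def by (metis inf.absorb_iff1)

lemma stone_map_uf:
  fixes \<phi> :: "'a::boolean_algebra \<Rightarrow> 'b::boolean_algebra"
  assumes "ba_hom \<phi>" "ultrafilter y" shows "ultrafilter (stone_map \<phi> y)"
  using assms unfolding ultrafilter_def stone_map_def ba_hom_def
  by (auto simp del: compl_le_compl_iff) (metis inf.absorb_iff1)

lemma stone_map_clopen:
  fixes \<phi> :: "'a::boolean_algebra \<Rightarrow> 'b::boolean_algebra"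
  assumes "ba_hom \<phi>"
  shows "{y \<in> topspace (stone_top TYPE('b)). stone_map \<phi> y \<in> clopen_of a} = clopen_of (\<phi> a)"
  using stone_map_uf[OF assms] by (auto simp: topspace_stone clopen_of_def stone_map_def)

lemma cont_stone_map:
  fixes \<phi> :: "'a::boolean_algebra \<Rightarrow> 'b::boolean_algebra"
  assumes "ba_hom \<phi>"
  shows "continuous_map (stone_top TYPE('b)) (stone_top TYPE('a)) (stone_map \<phi>)"
  unfolding continuous_map_def
proof (intro conjI allI impI)
  show "stone_map \<phi> \<in> topspace (stone_top TYPE('b)) \<rightarrow> topspace (stone_top TYPE('a))"
    using stone_map_uf[OF assms] by (auto simp: topspace_stone)
  fix U assume "openin (stone_top TYPE('a)) U"
  then have "generate_topology_on (range (clopen_of :: 'a \<Rightarrow> _)) U"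
    unfolding stone_top_def by (rule openin_topology_generated_by)
  then show "openin (stone_top TYPE('b)) {x \<in> topspace (stone_top TYPE('b)). stone_map \<phi> x \<in> U}"
  proof induction
    case Empty then show ?case by simp
  next
    case (Int a b)
    have "{x \<in> topspace (stone_top TYPE('b)). stone_map \<phi> x \<in> a \<inter> b} =
      {x \<in> topspace (stone_top TYPE('b)). stone_map \<phi> x \<in> a} \<inter> {x \<in> topspace (stone_top TYPE('b)). stone_map \<phi> x \<in> b}"
      by auto
    then show ?case using Int by (simp add: openin_Int)
  next
    case (UN K)
    have "{x \<in> topspace (stone_top TYPE('b)). stone_map \<phi> x \<in> \<Union>K} =
      (\<Union>k\<in>K. {x \<in> topspace (stone_top TYPE('b)). stone_map \<phi> x \<in> k})" by auto
    then show ?case using UN by (auto intro!: openin_Union)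
  next
    case (Basis s)
    then obtain a where "s = clopen_of a" by auto
    then show ?case using stone_map_clopen[OF assms, of a] openin_clopen by simp
  qed
qed

lemma stone_approx:
  fixes g :: "'a::boolean_algebra set \<Rightarrow> real"
  assumes g: "continuous_map (stone_top TYPE('a)) euclideanreal g" and e: "e > 0"
  shows "\<exists>F. finite F \<and> (\<forall>x. ultrafilter x \<longrightarrow> (\<exists>a\<in>F. a \<in> x)) \<and>
     (\<forall>a\<in>F. \<forall>x y. ultrafilter x \<longrightarrow> ultrafilter y \<longrightarrow> a \<in> x \<longrightarrow> a \<in> y \<longrightarrow> \<bar>g x - g y\<bar> < e)"
proof -
  define A where "A = {a. \<forall>x y. ultrafilter x \<longrightarrow> ultrafilter y \<longrightarrow> a \<in> x \<longrightarrow> a \<in> y \<longrightarrow> \<bar>g x - g y\<bar> < e}"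
  have "\<exists>a\<in>A. a \<in> x" if x: "ultrafilter x" for x
  proof -
    let ?S = "{z \<in> topspace (stone_top TYPE('a)). g z \<in> ball (g x) (e/2)}"
    have "\<forall>U. open U \<longrightarrow> openin (stone_top TYPE('a)) {x \<in> topspace (stone_top TYPE('a)). g x \<in> U}"
      using g by (simp add: continuous_map_def)
    then have op: "openin (stone_top TYPE('a)) ?S" using open_ball by blast
    have xin: "x \<in> ?S" using x e by (auto simp: topspace_stone)
    obtain a where a: "x \<in> clopen_of a" "clopen_of a \<subseteq> ?S" using stone_basis[OF op xin] by blast
    have "a \<in> A" unfolding A_def mem_Collect_eq
    proof (intro allI impI)
      fix z w :: "'a set" assume "ultrafilter z" "ultrafilter w" "a \<in> z" "a \<in> w"
      then have "z \<in> ?S" "w \<in> ?S" using a(2) by (auto simp: clopen_of_def)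
      then have "\<bar>g x - g z\<bar> < e/2" "\<bar>g x - g w\<bar> < e/2" by (auto simp: dist_real_def)
      then show "\<bar>g z - g w\<bar> < e" by arith
    qed
    then show ?thesis using a by (auto simp: clopen_of_def)
  qed
  then obtain F where "F \<subseteq> A" "finite F" "\<forall>x. ultrafilter x \<longrightarrow> (\<exists>a\<in>F. a \<in> x)"
    using stone_cover[of A] by blast
  then show ?thesis unfolding A_def by blast
qed

lemma stone_bounded:
  fixes g :: "'a::boolean_algebra set \<Rightarrow> real"
  assumes g: "continuous_map (stone_top TYPE('a)) euclideanreal g"
  shows "\<exists>C. \<forall>x. ultrafilter x \<longrightarrow> \<bar>g x\<bar> \<le> C"
proof -
  obtain F where F: "finite F" "\<forall>x. ultrafilter x \<longrightarrow> (\<exists>a\<in>F. a \<in> x)"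
     "\<forall>a\<in>F. \<forall>x y. ultrafilter x \<longrightarrow> ultrafilter y \<longrightarrow> a \<in> x \<longrightarrow> a \<in> y \<longrightarrow> \<bar>g x - g y\<bar> < 1"
    using stone_approx[OF g, of 1] by auto
  define p where "p a = (SOME x::'a set. ultrafilter x \<and> a \<in> x)" for a :: 'a
  have "\<bar>g x\<bar> \<le> (\<Sum>a\<in>F. \<bar>g (p a)\<bar>) + 1" if x: "ultrafilter x" for x
  proof -
    obtain a where a: "a \<in> F" "a \<in> x" using F x by blast
    then have "ultrafilter (p a) \<and> a \<in> p a" unfolding p_def using x by (metis (mono_tags, lifting) someI)
    then have "\<bar>g x - g (p a)\<bar> < 1" using F(3) a x by blast
    moreover have "\<bar>g (p a)\<bar> \<le> (\<Sum>a\<in>F. \<bar>g (p a)\<bar>)"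
      using F(1) a(1) by (intro member_le_sum) auto
    ultimately show ?thesis by linarith
  qed
  then show ?thesis by blast
qed



lemma nn_integral_sum_measures:
  assumes sN: "sets N = sets M" and sK: "sets K = sets M"
    and em: "\<And>A. A \<in> sets M \<Longrightarrow> emeasure M A = emeasure N A + emeasure K A"
    and u: "u \<in> borel_measurable M"
  shows "(\<integral>\<^sup>+x. u x \<partial>M) = (\<integral>\<^sup>+x. u x \<partial>N) + (\<integral>\<^sup>+x. u x \<partial>K)"
proof -
  have sp: "space N = space M" "space K = space M" using sets_eq_imp_space_eq sN sK by metis+
  have mN: "f \<in> borel_measurable N" "f \<in> borel_measurable K" if "f \<in> borel_measurable M" for f :: "_ \<Rightarrow> ennreal"
    using that measurable_cong_sets[OF sN refl] measurable_cong_sets[OF sK refl] by auto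
  show ?thesis using u
  proof (induction rule: borel_measurable_induct)
    case (cong f g)
    have "(\<integral>\<^sup>+x. f x \<partial>M) = (\<integral>\<^sup>+x. g x \<partial>M)" using cong by (intro nn_integral_cong) auto
    moreover have "(\<integral>\<^sup>+x. f x \<partial>N) = (\<integral>\<^sup>+x. g x \<partial>N)" using cong sp by (intro nn_integral_cong) auto
    moreover have "(\<integral>\<^sup>+x. f x \<partial>K) = (\<integral>\<^sup>+x. g x \<partial>K)" using cong sp by (intro nn_integral_cong) auto
    ultimately show ?case using cong by simp
  next
    case (set A)
    then show ?case using sN sK em by (simp add: nn_integral_indicator)
  next
    case (mult u c)
    have "(\<integral>\<^sup>+x. c * u x \<partial>L) = c * (\<integral>\<^sup>+x. u x \<partial>L)" if "u \<in> borel_measurable L" for L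
      using that by (rule nn_integral_cmult)
    then show ?case using mult(2,4) mN[OF mult(2)] by (simp add: distrib_left)
  next
    case (add u v)
    have um: "u \<in> borel_measurable M" and vm: "v \<in> borel_measurable M" by fact+
    have e0: "(\<integral>\<^sup>+x. v x + u x \<partial>L) = (\<integral>\<^sup>+x. v x \<partial>L) + (\<integral>\<^sup>+x. u x \<partial>L)"
      if "u \<in> borel_measurable L" "v \<in> borel_measurable L" for L
      using that by (intro nn_integral_add) auto
    have IHu: "(\<integral>\<^sup>+x. u x \<partial>M) = (\<integral>\<^sup>+x. u x \<partial>N) + (\<integral>\<^sup>+x. u x \<partial>K)" by fact
    have IHv: "(\<integral>\<^sup>+x. v x \<partial>M) = (\<integral>\<^sup>+x. v x \<partial>N) + (\<integral>\<^sup>+x. v x \<partial>K)" by fact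
    have r: "(a + b) + (c + d) = (a + c) + (b + d)" for a b c d :: ennreal by (simp add: add_ac)
    show ?case
      unfolding e0[OF um vm] e0[OF mN(1)[OF um] mN(1)[OF vm]] e0[OF mN(2)[OF um] mN(2)[OF vm]] IHu IHv
      by (rule r)
  next
    case (seq U)
    have incU: "incseq U" by fact
    have mU: "\<And>i. U i \<in> borel_measurable M" by fact
    have IH: "\<And>i. (\<integral>\<^sup>+x. U i x \<partial>M) = (\<integral>\<^sup>+x. U i x \<partial>N) + (\<integral>\<^sup>+x. U i x \<partial>K)" by fact
    have inc: "incseq (\<lambda>i. \<integral>\<^sup>+x. U i x \<partial>L)" for L
      using incU by (auto simp: incseq_def le_fun_def intro!: nn_integral_mono)
    have s: "(\<integral>\<^sup>+x. (SUP i. U i) x \<partial>L) = (SUP i. \<integral>\<^sup>+x. U i x \<partial>L)" if "\<And>i. U i \<in> borel_measurable L" for L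
      unfolding SUP_apply by (rule nn_integral_monotone_convergence_SUP[OF incU that])
    have "(SUP i. \<integral>\<^sup>+x. U i x \<partial>M) = (SUP i. (\<integral>\<^sup>+x. U i x \<partial>N) + (\<integral>\<^sup>+x. U i x \<partial>K))"
      using IH by simp
    also have "\<dots> = (SUP i. \<integral>\<^sup>+x. U i x \<partial>N) + (SUP i. \<integral>\<^sup>+x. U i x \<partial>K)"
      by (rule ennreal_SUP_add[OF inc inc])
    finally show ?case using s[of M] s[of N] s[of K] mU mN[OF mU] by simp
  qed
qed

lemma integral_sum_measures:
  fixes g :: "'a \<Rightarrow> real"
  assumes fM: "finite_measure M" and fN: "finite_measure N" and fK: "finite_measure K"
    and sN: "sets N = sets M" and sK: "sets K = sets M"
    and me: "\<And>A. A \<in> sets M \<Longrightarrow> measure M A = measure N A + measure K A"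
    and g: "g \<in> borel_measurable M" and bnd: "\<And>x. x \<in> space M \<Longrightarrow> \<bar>g x\<bar> \<le> C"
  shows "integral\<^sup>L M g = integral\<^sup>L N g + integral\<^sup>L K g"
proof -
  have sp: "space N = space M" "space K = space M" using sets_eq_imp_space_eq sN sK by metis+
  have em: "emeasure M A = emeasure N A + emeasure K A" if "A \<in> sets M" for A
  proof -
    have "emeasure M A = ennreal (measure M A)" by (rule finite_measure.emeasure_eq_measure[OF fM])
    also have "\<dots> = ennreal (measure N A + measure K A)" using me[OF that] by simp
    also have "\<dots> = ennreal (measure N A) + ennreal (measure K A)" by (rule ennreal_plus) auto
    also have "\<dots> = emeasure N A + emeasure K A"
      using finite_measure.emeasure_eq_measure[OF fN] finite_measure.emeasure_eq_measure[OF fK] by simp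
    finally show ?thesis .
  qed
  have gN: "g \<in> borel_measurable N" "g \<in> borel_measurable K"
    using g measurable_cong_sets[OF sN refl] measurable_cong_sets[OF sK refl] by auto
  have int: "integrable L g" if "finite_measure L" "g \<in> borel_measurable L" "space L = space M" for L
    using that bnd by (intro finite_measure.integrable_const_bound[where B=C]) auto
  have iM: "integrable M g" and iN: "integrable N g" and iK: "integrable K g"
    using int[OF fM g] int[OF fN gN(1) sp(1)] int[OF fK gN(2) sp(2)] by auto
  have p: "(\<integral>\<^sup>+x. ennreal (g x) \<partial>M) = (\<integral>\<^sup>+x. ennreal (g x) \<partial>N) + (\<integral>\<^sup>+x. ennreal (g x) \<partial>K)"
    using g by (intro nn_integral_sum_measures[OF sN sK em]) auto
  have n: "(\<integral>\<^sup>+x. ennreal (- g x) \<partial>M) = (\<integral>\<^sup>+x. ennreal (- g x) \<partial>N) + (\<integral>\<^sup>+x. ennreal (- g x) \<partial>K)"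
    using g by (intro nn_integral_sum_measures[OF sN sK em]) auto
  have fin: "(\<integral>\<^sup>+x. ennreal (g x) \<partial>L) < top" "(\<integral>\<^sup>+x. ennreal (- g x) \<partial>L) < top" if "integrable L g" for L
    using that unfolding real_integrable_def by (auto simp: less_top)
  show ?thesis
    unfolding real_lebesgue_integral_def[OF iM] real_lebesgue_integral_def[OF iN] real_lebesgue_integral_def[OF iK] p n
    using fin[OF iN] fin[OF iK] by (simp add: enn2real_plus)
qed

definition sr :: "'x topology \<Rightarrow> 'x measure \<Rightarrow> 'x set \<Rightarrow> real" where
  "sr X N = (\<lambda>B. if B \<in> borel_sets X then measure N B else 0)"

lemma radon_null:
  assumes "radon_measure X N" shows "radon_measure X (null_measure N)"
proof -
  have f: "finite_measure (null_measure N)" by (rule finite_measureI) simp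
  have s: "(SUP K \<in> S. emeasure (null_measure N) K) = 0" for S
    by (simp add: SUP_constant bot_ennreal)
  show ?thesis using assms f unfolding radon_measure_def s by simp
qed

lemma signed_sr: "radon_measure X N \<Longrightarrow> signed_radon X (sr X N)"
  unfolding signed_radon_def sr_def using radon_null
  by (intro exI[of _ N] exI[of _ "null_measure N"]) auto

lemma signed_integral_sr:
  assumes N: "radon_measure X N" and g: "g \<in> borel_measurable (borelM X)"
    and bnd: "\<And>x. x \<in> topspace X \<Longrightarrow> \<bar>g x\<bar> \<le> C"
  shows "signed_integral X (sr X N) g = integral\<^sup>L N g"
proof -
  obtain M1 M2 where d: "radon_decomp X (sr X N) = (M1, M2)" by fastforce
  let ?P = "\<lambda>(M1, M2). radon_measure X M1 \<and> radon_measure X M2 \<and>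
     (\<forall>B. sr X N B = (if B \<in> borel_sets X then measure M1 B - measure M2 B else 0))"
  have ex: "\<exists>p. ?P p" using signed_sr[OF N] unfolding signed_radon_def by auto
  have "?P (radon_decomp X (sr X N))" unfolding radon_decomp_def using someI_ex[OF ex] by simp
  then have P: "radon_measure X M1" "radon_measure X M2"
    "\<And>B. B \<in> borel_sets X \<Longrightarrow> measure N B = measure M1 B - measure M2 B"
    using d by (auto simp: sr_def split: if_splits)
  have "integral\<^sup>L M1 g = integral\<^sup>L N g + integral\<^sup>L M2 g"
  proof (rule integral_sum_measures[where C=C])
    show "finite_measure M1" "finite_measure N" "finite_measure M2" using P N by (auto simp: radon_measure_def)
    show "sets N = sets M1" "sets M2 = sets M1" using P N by (auto simp: radon_measure_def)
    show "measure M1 A = measure N A + measure M2 A" if "A \<in> sets M1" for A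
      using that P N by (auto simp: radon_measure_def)
    show "g \<in> borel_measurable M1" using g P(1) measurable_cong_sets[of "borelM X" M1] by (auto simp: radon_measure_def)
    show "\<And>x. x \<in> space M1 \<Longrightarrow> \<bar>g x\<bar> \<le> C" using bnd P(1) by (auto simp: radon_measure_def)
  qed
  then show ?thesis unfolding signed_integral_def d by simp
qed

lemma tv_bound:
  assumes "signed_radon X \<nu>" "B \<in> borel_sets X"
  shows "\<bar>\<nu> B\<bar> \<le> tv_norm X \<nu>"
proof -
  obtain M1 M2 where M: "radon_measure X M1" "radon_measure X M2"
    "\<And>B. \<nu> B = (if B \<in> borel_sets X then measure M1 B - measure M2 B else 0)"
    using assms(1) unfolding signed_radon_def by blast
  interpret M1: finite_measure M1 using M by (auto simp: radon_measure_def)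
  interpret M2: finite_measure M2 using M by (auto simp: radon_measure_def)
  let ?S = "{P. finite P \<and> P \<subseteq> borel_sets X \<and> disjoint P}"
  have "(\<Sum>C\<in>P. \<bar>\<nu> C\<bar>) \<le> measure M1 (space M1) + measure M2 (space M2)" if P: "P \<in> ?S" for P
  proof -
    have sets: "\<And>C. C \<in> P \<Longrightarrow> C \<in> sets M1" "\<And>C. C \<in> P \<Longrightarrow> C \<in> sets M2"
      using P M by (auto simp: radon_measure_def)
    have "(\<Sum>C\<in>P. \<bar>\<nu> C\<bar>) \<le> (\<Sum>C\<in>P. measure M1 C + measure M2 C)"
    proof (intro sum_mono)
      fix C assume "C \<in> P"
      then have "C \<in> borel_sets X" using P by auto
      moreover have "0 \<le> measure M1 C" "0 \<le> measure M2 C" by auto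
      ultimately show "\<bar>\<nu> C\<bar> \<le> measure M1 C + measure M2 C" using M(3)[of C] by (simp add: abs_le_iff)
    qed
    also have "\<dots> = (\<Sum>C\<in>P. measure M1 C) + (\<Sum>C\<in>P. measure M2 C)" by (simp add: sum.distrib)
    also have "(\<Sum>C\<in>P. measure M1 C) = measure M1 (\<Union>P)"
      using P sets by (intro measure_Union'[symmetric]) (auto simp: M1.fmeasurable_eq_sets)
    also have "(\<Sum>C\<in>P. measure M2 C) = measure M2 (\<Union>P)"
      using P sets by (intro measure_Union'[symmetric]) (auto simp: M2.fmeasurable_eq_sets)
    also have "measure M1 (\<Union>P) + measure M2 (\<Union>P) \<le> measure M1 (space M1) + measure M2 (space M2)"
      using P sets by (intro add_mono M1.bounded_measure M2.bounded_measure)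
    finally show ?thesis .
  qed
  then have bdd: "bdd_above ((\<lambda>P. \<Sum>C\<in>P. \<bar>\<nu> C\<bar>) ` ?S)" by (intro bdd_aboveI2) 
  have "{B} \<in> ?S" using assms(2) by auto
  then have "(\<Sum>C\<in>{B}. \<bar>\<nu> C\<bar>) \<le> tv_norm X \<nu>"
    unfolding tv_norm_def by (rule cSUP_upper[OF _ bdd])
  then show ?thesis by simp
qed

lemma eval_functional:
  assumes B: "B \<in> borel_sets X"
  shows "bounded_functional X (\<lambda>\<nu>. \<nu> B)"
  unfolding bounded_functional_def
proof (intro conjI)
  show "\<exists>C. \<forall>\<nu>. signed_radon X \<nu> \<longrightarrow> \<bar>\<nu> B\<bar> \<le> C * tv_norm X \<nu>"
  proof (intro exI[of _ 1] allI impI)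
    fix \<nu> assume "signed_radon X \<nu>"
    from tv_bound[OF this B] show "\<bar>\<nu> B\<bar> \<le> 1 * tv_norm X \<nu>" by simp
  qed
qed auto



lemma radon_push:
  fixes \<phi> :: "'a::boolean_algebra \<Rightarrow> 'b::boolean_algebra" and M :: "'b set measure"
  assumes M: "radon_measure (stone_top TYPE('b)) M" and \<phi>: "ba_hom \<phi>" and D: "D \<in> sets M"
  defines "N \<equiv> distr (restrict_space M D) (borelM (stone_top TYPE('a))) (stone_map \<phi>)"
  shows "radon_measure (stone_top TYPE('a)) N"
    and "\<And>E. E \<in> borel_sets (stone_top TYPE('a)) \<Longrightarrow> measure N E = measure M (stone_map \<phi> -` E \<inter> D)"
proof -
  let ?XA = "stone_top TYPE('a)" and ?XB = "stone_top TYPE('b)" and ?f = "stone_map \<phi>"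
  have sM: "sets M = borel_sets ?XB" "space M = topspace ?XB" and fM: "finite_measure M"
    using M by (auto simp: radon_measure_def)
  have cont: "continuous_map ?XB ?XA ?f" by (rule cont_stone_map[OF \<phi>])
  have fm: "?f \<in> measurable M (borelM ?XA)" by (rule cont_measurable[OF cont sM])
  have fr: "?f \<in> measurable (restrict_space M D) (borelM ?XA)" by (rule measurable_restrict_space1[OF fm])
  have Dsub: "D \<subseteq> space M" using D by (rule sets.sets_into_space)
  have DM: "D \<inter> space M \<in> sets M" using D Dsub by (simp add: Int_absorb2)
  have Gs: "?f -` E \<inter> D \<in> sets M" if "E \<in> borel_sets ?XA" for E
  proof -
    have "?f -` E \<inter> space M \<in> sets M" using measurable_sets[OF fm] that by simp
    then have "(?f -` E \<inter> space M) \<inter> D \<in> sets M" using D by blast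
    moreover have "(?f -` E \<inter> space M) \<inter> D = ?f -` E \<inter> D" using Dsub by auto
    ultimately show ?thesis by simp
  qed
  have em: "emeasure N E = emeasure M (?f -` E \<inter> D)" if E: "E \<in> borel_sets ?XA" for E
  proof -
    have "emeasure N E = emeasure (restrict_space M D) (?f -` E \<inter> space (restrict_space M D))"
      unfolding N_def using E by (intro emeasure_distr[OF fr]) simp
    also have "space (restrict_space M D) = D" using Dsub by (auto simp: space_restrict_space)
    also have "emeasure (restrict_space M D) (?f -` E \<inter> D) = emeasure M (?f -` E \<inter> D)"
      by (rule emeasure_restrict_space[OF DM]) auto
    finally show ?thesis .
  qed
  show "measure N E = measure M (?f -` E \<inter> D)" if "E \<in> borel_sets ?XA" for E
    using em[OF that] by (simp add: measure_def)
  have fN: "finite_measure N"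
  proof -
    have "finite_measure (restrict_space M D)" using fM D by (rule finite_measure_restrict_space)
    then show ?thesis unfolding N_def using fr by (rule finite_measure.finite_measure_distr)
  qed
  have inner: "emeasure N E = (SUP K \<in> {K. compactin ?XA K \<and> K \<subseteq> E}. emeasure N K)"
    if E: "E \<in> borel_sets ?XA" for E
  proof (rule antisym)
    have G: "?f -` E \<inter> D \<in> borel_sets ?XB" using Gs[OF E] sM by simp
    have "emeasure N E = emeasure M (?f -` E \<inter> D)" by (rule em[OF E])
    also have "\<dots> = (SUP K \<in> {K. compactin ?XB K \<and> K \<subseteq> ?f -` E \<inter> D}. emeasure M K)"
      using M G by (auto simp: radon_measure_def)
    also have "\<dots> \<le> (SUP K \<in> {K. compactin ?XA K \<and> K \<subseteq> E}. emeasure N K)"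
    proof (rule SUP_mono)
      fix K assume K: "K \<in> {K. compactin ?XB K \<and> K \<subseteq> ?f -` E \<inter> D}"
      then have cK: "compactin ?XA (?f ` K)" using image_compactin[OF _ cont] by auto
      have sub: "?f ` K \<subseteq> E" using K by auto
      have bK: "?f ` K \<in> borel_sets ?XA"
        by (rule closed_in_borel[OF compactin_imp_closedin[OF hausdorff_stone cK]])
      have "emeasure M K \<le> emeasure M (?f -` (?f ` K) \<inter> D)"
        using K Gs[OF bK] by (intro emeasure_mono) auto
      also have "\<dots> = emeasure N (?f ` K)" using em[OF bK] by simp
      finally show "\<exists>K'\<in>{K. compactin ?XA K \<and> K \<subseteq> E}. emeasure M K \<le> emeasure N K'"
        using cK sub by blast
    qed
    finally show "emeasure N E \<le> (SUP K \<in> {K. compactin ?XA K \<and> K \<subseteq> E}. emeasure N K)" .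
  next
    show "(SUP K \<in> {K. compactin ?XA K \<and> K \<subseteq> E}. emeasure N K) \<le> emeasure N E"
    proof (rule SUP_least)
      fix K assume K: "K \<in> {K. compactin ?XA K \<and> K \<subseteq> E}"
      have "K \<in> borel_sets ?XA" using K
        by (auto intro!: closed_in_borel compactin_imp_closedin[OF hausdorff_stone])
      then show "emeasure N K \<le> emeasure N E"
        using K E unfolding N_def by (intro emeasure_mono) auto
    qed
  qed
  show "radon_measure ?XA N"
    unfolding radon_measure_def using fN inner by (simp add: N_def)
qed



lemma conv_integral:
  fixes \<mu> :: "'b::boolean_algebra \<Rightarrow> real" and M :: "'b set measure"
    and \<phi>s :: "nat \<Rightarrow> 'a::boolean_algebra \<Rightarrow> 'b" and \<phi> :: "'a \<Rightarrow> 'b"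
    and g :: "'a set \<Rightarrow> real" and h :: "'b set \<Rightarrow> real"
  assumes M: "radon_measure (stone_top TYPE('b)) M" and Mc: "\<And>b. measure M (clopen_of b) = \<mu> b"
    and hs: "\<And>n. ba_hom (\<phi>s n)" and h0: "ba_hom \<phi>" and pc: "pointwise_metric_conv \<mu> \<phi>s \<phi>"
    and g: "continuous_map (stone_top TYPE('a)) euclideanreal g"
    and hm: "h \<in> borel_measurable M" and hb: "\<And>y. \<bar>h y\<bar> \<le> 1"
  shows "(\<lambda>n. \<integral>y. h y * g (stone_map (\<phi>s n) y) \<partial>M) \<longlonglongrightarrow> (\<integral>y. h y * g (stone_map \<phi> y) \<partial>M)"
proof -
  let ?XA = "stone_top TYPE('a)" and ?XB = "stone_top TYPE('b)"
  have sM: "sets M = borel_sets ?XB" "space M = topspace ?XB" and fM: "finite_measure M"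
    using M by (auto simp: radon_measure_def)
  interpret finite_measure M by (rule fM)
  obtain C0 where C0: "\<And>x. ultrafilter x \<Longrightarrow> \<bar>g x\<bar> \<le> C0" using stone_bounded[OF g] by blast
  define C where "C = max C0 0"
  have Cb: "\<And>x. ultrafilter x \<Longrightarrow> \<bar>g x\<bar> \<le> C" and C0': "C \<ge> 0"
    using C0 unfolding C_def by (auto intro: le_max_iff_disj[THEN iffD2])
  have spM: "ultrafilter y" if "y \<in> space M" for y using that sM by (simp add: topspace_stone)
  have gm: "g \<in> borel_measurable (borelM ?XA)" by (rule cont_borel_measurable[OF g]) simp_all
  have meas: "(\<lambda>y. h y * g (stone_map \<psi> y)) \<in> borel_measurable M" if "ba_hom \<psi>" for \<psi> :: "'a \<Rightarrow> 'b"
  proof -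
    have "(\<lambda>y. g (stone_map \<psi> y)) \<in> borel_measurable M"
      using measurable_comp[OF cont_measurable[OF cont_stone_map[OF that] sM] gm] by (simp add: comp_def)
    then show ?thesis using hm by (intro borel_measurable_times)
  qed
  have int: "integrable M (\<lambda>y. h y * g (stone_map \<psi> y))" if "ba_hom \<psi>" for \<psi> :: "'a \<Rightarrow> 'b"
  proof (rule integrable_const_bound[where B=C])
    show "AE x in M. norm (h x * g (stone_map \<psi> x)) \<le> C"
    proof (rule AE_I2)
      fix x assume "x \<in> space M"
      then have "\<bar>g (stone_map \<psi> x)\<bar> \<le> C" using Cb stone_map_uf[OF that] spM by blast
      moreover have "\<bar>h x\<bar> \<le> 1" by (rule hb)
      ultimately have "\<bar>h x\<bar> * \<bar>g (stone_map \<psi> x)\<bar> \<le> 1 * C"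
        by (intro mult_mono) auto
      then show "norm (h x * g (stone_map \<psi> x)) \<le> C" by (simp add: abs_mult)
    qed
    show "(\<lambda>y. h y * g (stone_map \<psi> y)) \<in> borel_measurable M" by (rule meas[OF that])
  qed
  define m where "m = measure M (space M)"
  have m0: "m \<ge> 0" unfolding m_def by simp
  show ?thesis unfolding LIMSEQ_iff
  proof (intro allI impI)
    fix r :: real assume r: "r > 0"
    define e where "e = r / (2 * (m + 1))"
    have e0: "e > 0" unfolding e_def using r m0 by simp
    have em: "e * m < r / 2"
    proof -
      have "e * m = (r / 2) * (m / (m + 1))" unfolding e_def by simp
      also have "\<dots> < (r / 2) * 1" using r m0 by (intro mult_strict_left_mono) auto
      finally show ?thesis by simp
    qed
    from stone_approx[OF g e0] obtain F where F0: "finite F \<and> (\<forall>x. ultrafilter x \<longrightarrow> (\<exists>a\<in>F. a \<in> x)) \<and>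
      (\<forall>a\<in>F. \<forall>x y. ultrafilter x \<longrightarrow> ultrafilter y \<longrightarrow> a \<in> x \<longrightarrow> a \<in> y \<longrightarrow> \<bar>g x - g y\<bar> < e)" ..
    note F = F0[THEN conjunct1] F0[THEN conjunct2, THEN conjunct1] F0[THEN conjunct2, THEN conjunct2]
    define s where "s n = (\<Sum>a\<in>F. d_metric \<mu> (\<phi>s n a) (\<phi> a))" for n
    have "s \<longlonglongrightarrow> 0" unfolding s_def
      using pc unfolding pointwise_metric_conv_def by (intro tendsto_null_sum) auto
    moreover have r4: "r / (4 * (C + 1)) > 0" using r C0' by simp
    ultimately obtain no where no: "\<And>n. n \<ge> no \<Longrightarrow> norm (s n - 0) < r / (4 * (C + 1))"
      unfolding LIMSEQ_iff by blast
    show "\<exists>no. \<forall>n\<ge>no. norm ((\<integral>y. h y * g (stone_map (\<phi>s n) y) \<partial>M) - (\<integral>y. h y * g (stone_map \<phi> y) \<partial>M)) < r"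
    proof (intro exI[of _ no] allI impI)
      fix n assume n: "n \<ge> no"
      define E where "E = (\<Union>a\<in>F. clopen_of (sym_diff (\<phi>s n a) (\<phi> a)))"
      have cs: "clopen_of b \<in> sets M" for b :: 'b
        using sM open_in_borel[OF openin_clopen] by simp
      have Es: "E \<in> sets M" unfolding E_def using F(1) cs by auto
      have mE: "measure M E \<le> s n"
      proof -
        have "measure M E \<le> (\<Sum>a\<in>F. measure M (clopen_of (sym_diff (\<phi>s n a) (\<phi> a))))"
          unfolding E_def using F(1) cs by (intro measure_UNION_le) auto
        also have "\<dots> = s n" unfolding s_def d_metric_def Mc by simp
        finally show ?thesis .
      qed
      have Esub: "E \<subseteq> space M" using Es by (rule sets.sets_into_space)
      let ?d = "\<lambda>y. h y * g (stone_map (\<phi>s n) y) - h y * g (stone_map \<phi> y)"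
      let ?b = "\<lambda>y. e + 2 * C * indicator E y"
      have pw: "\<bar>?d y\<bar> \<le> ?b y" if y: "y \<in> space M" for y
      proof -
        have uy: "ultrafilter y" using spM[OF y] .
        have u1: "ultrafilter (stone_map (\<phi>s n) y)" and u2: "ultrafilter (stone_map \<phi> y)"
          using stone_map_uf[OF hs uy] stone_map_uf[OF h0 uy] by auto
        have "\<bar>?d y\<bar> = \<bar>h y\<bar> * \<bar>g (stone_map (\<phi>s n) y) - g (stone_map \<phi> y)\<bar>"
          by (simp add: abs_mult[symmetric] right_diff_distrib)
        also have "\<dots> \<le> 1 * \<bar>g (stone_map (\<phi>s n) y) - g (stone_map \<phi> y)\<bar>"
          using hb by (intro mult_right_mono) auto
        finally have d1: "\<bar>?d y\<bar> \<le> \<bar>g (stone_map (\<phi>s n) y) - g (stone_map \<phi> y)\<bar>" by simp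
        show ?thesis
        proof (cases "y \<in> E")
          case True
          have "\<bar>g (stone_map (\<phi>s n) y) - g (stone_map \<phi> y)\<bar> \<le> C + C"
            using Cb[OF u1] Cb[OF u2] by linarith
          then show ?thesis using d1 True e0 by simp
        next
          case False
          then have eq: "\<phi>s n a \<in> y \<longleftrightarrow> \<phi> a \<in> y" if "a \<in> F" for a
            using that uf_symdiff[OF uy, of "\<phi>s n a" "\<phi> a"] uy unfolding E_def clopen_of_def by blast
          obtain a where a: "a \<in> F" "a \<in> stone_map \<phi> y" using F(2) u2 by blast
          then have "a \<in> stone_map (\<phi>s n) y" using eq[OF a(1)] by (simp add: stone_map_def)
          then have "\<bar>g (stone_map (\<phi>s n) y) - g (stone_map \<phi> y)\<bar> < e"
            using F(3) a u1 u2 by blast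
          then show ?thesis using d1 False C0' by simp
        qed
      qed
      have ib: "integrable M ?b"
      proof (rule integrable_const_bound[where B="e + 2 * C"])
        show "AE x in M. norm (?b x) \<le> e + 2 * C" using e0 C0' by (intro AE_I2) (auto split: split_indicator)
        show "?b \<in> borel_measurable M" using Es by (auto intro!: borel_measurable_add borel_measurable_times)
      qed
      have "norm ((\<integral>y. h y * g (stone_map (\<phi>s n) y) \<partial>M) - (\<integral>y. h y * g (stone_map \<phi> y) \<partial>M))
          = \<bar>\<integral>y. ?d y \<partial>M\<bar>"
        using Bochner_Integration.integral_diff[OF int[OF hs] int[OF h0]] by simp
      also have "\<dots> \<le> (\<integral>y. \<bar>?d y\<bar> \<partial>M)" by (rule integral_abs_bound)
      also have "\<dots> \<le> (\<integral>y. ?b y \<partial>M)"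
        using ib pw e0 C0' by (intro integral_mono') (auto split: split_indicator)
      also have "(\<integral>y. ?b y \<partial>M) = e * m + 2 * C * measure M E"
      proof -
        have iE: "integrable M (\<lambda>y. indicator E y :: real)"
        proof (rule integrable_const_bound[where B=1])
          show "AE x in M. norm (indicator E x :: real) \<le> 1" by (intro AE_I2) (auto split: split_indicator)
          show "(\<lambda>y. indicator E y :: real) \<in> borel_measurable M" using Es by simp
        qed
        have iE2: "integrable M (\<lambda>y. 2 * C * indicator E y)" using iE by (rule integrable_mult_right)
        have ic: "integrable M (\<lambda>y. e)" by simp
        have "(\<integral>y. ?b y \<partial>M) = (\<integral>y. e \<partial>M) + (\<integral>y. 2 * C * indicator E y \<partial>M)"
          by (rule Bochner_Integration.integral_add[OF ic iE2])
        also have "(\<integral>y. 2 * C * indicator E y \<partial>M) = 2 * C * (\<integral>y. indicator E y \<partial>M)"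
          using iE by (rule Bochner_Integration.integral_mult_right)
        also have "(\<integral>y. indicator E y \<partial>M) = measure M E"
          using Esub by (simp add: Int_absorb2)
        finally show ?thesis by (simp add: m_def mult.commute)
      qed
      also have "\<dots> < r"
      proof -
        have "s n < r / (4 * (C + 1))" using no[OF n] by simp
        then have "2 * C * measure M E \<le> 2 * C * (r / (4 * (C + 1)))"
          using mE C0' by (intro mult_left_mono) auto
        also have "\<dots> = (r / 2) * (C / (C + 1))" using C0' by (simp add: divide_simps)
        also have "\<dots> < (r / 2) * 1" using r C0' by (intro mult_strict_left_mono) auto
        finally show ?thesis using em by linarith
      qed
      finally show "norm ((\<integral>y. h y * g (stone_map (\<phi>s n) y) \<partial>M) - (\<integral>y. h y * g (stone_map \<phi> y) \<partial>M)) < r" .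
    qed
  qed
qed



lemma key_conv:
  fixes \<mu> :: "'b::boolean_algebra \<Rightarrow> real" and M :: "'b set measure"
    and \<phi>s :: "nat \<Rightarrow> 'a::boolean_algebra \<Rightarrow> 'b" and \<phi> :: "'a \<Rightarrow> 'b"
  assumes G: "grothendieck_property TYPE('a)"
    and M: "radon_measure (stone_top TYPE('b)) M" and Mc: "\<And>b. measure M (clopen_of b) = \<mu> b"
    and hs: "\<And>n. ba_hom (\<phi>s n)" and h0: "ba_hom \<phi>" and pc: "pointwise_metric_conv \<mu> \<phi>s \<phi>"
    and D: "D \<in> sets M" and B: "B \<in> borel_sets (stone_top TYPE('a))"
  shows "(\<lambda>n. measure M (stone_map (\<phi>s n) -` B \<inter> D)) \<longlonglongrightarrow> measure M (stone_map \<phi> -` B \<inter> D)"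
proof -
  let ?XA = "stone_top TYPE('a)" and ?XB = "stone_top TYPE('b)"
  have sM: "sets M = borel_sets ?XB" "space M = topspace ?XB"
    using M by (auto simp: radon_measure_def)
  define N where "N \<psi> = distr (restrict_space M D) (borelM ?XA) (stone_map \<psi>)" for \<psi> :: "'a \<Rightarrow> 'b"
  have Nr: "radon_measure ?XA (N \<psi>)" if "ba_hom \<psi>" for \<psi>
    unfolding N_def by (rule radon_push(1)[OF M that D])
  have Nm: "measure (N \<psi>) E = measure M (stone_map \<psi> -` E \<inter> D)" if "ba_hom \<psi>" "E \<in> borel_sets ?XA" for \<psi> E
    unfolding N_def by (rule radon_push(2)[OF M that(1) D that(2)])
  define \<nu>s where "\<nu>s n = sr ?XA (N (\<phi>s n))" for n
  define \<nu> where "\<nu> = sr ?XA (N \<phi>)"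
  have sr1: "signed_radon ?XA (\<nu>s n)" for n unfolding \<nu>s_def by (rule signed_sr[OF Nr[OF hs]])
  have sr0: "signed_radon ?XA \<nu>" unfolding \<nu>_def by (rule signed_sr[OF Nr[OF h0]])
  have Dsub: "D \<subseteq> space M" using D by (rule sets.sets_into_space)
  have DM: "D \<inter> space M \<in> sets M" using D Dsub by (simp add: Int_absorb2)
  have int_eq: "signed_integral ?XA (sr ?XA (N \<psi>)) g = (\<integral>y. indicator D y * g (stone_map \<psi> y) \<partial>M)"
    if \<psi>: "ba_hom \<psi>" and g: "continuous_map ?XA euclideanreal g" for \<psi> g
  proof -
    obtain C where C: "\<And>x. ultrafilter x \<Longrightarrow> \<bar>g x\<bar> \<le> C" using stone_bounded[OF g] by blast
    have gm: "g \<in> borel_measurable (borelM ?XA)" by (rule cont_borel_measurable[OF g]) simp_all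
    have fm: "stone_map \<psi> \<in> measurable M (borelM ?XA)" by (rule cont_measurable[OF cont_stone_map[OF \<psi>] sM])
    have fr: "stone_map \<psi> \<in> measurable (restrict_space M D) (borelM ?XA)" by (rule measurable_restrict_space1[OF fm])
    have "signed_integral ?XA (sr ?XA (N \<psi>)) g = integral\<^sup>L (N \<psi>) g"
      using C by (intro signed_integral_sr[OF Nr[OF \<psi>] gm]) (auto simp: topspace_stone)
    also have "\<dots> = (\<integral>y. g (stone_map \<psi> y) \<partial>(restrict_space M D))"
      unfolding N_def by (rule integral_distr[OF fr gm])
    also have "\<dots> = (\<integral>y. indicator D y *\<^sub>R g (stone_map \<psi> y) \<partial>M)"
      by (rule integral_restrict_space[OF DM])
    finally show ?thesis by simp
  qed
  have wsc: "weak_star_conv ?XA \<nu>s \<nu>"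
    unfolding weak_star_conv_def
  proof (intro allI impI)
    fix g assume g: "continuous_map ?XA euclideanreal g"
    have "(\<lambda>n. \<integral>y. indicator D y * g (stone_map (\<phi>s n) y) \<partial>M) \<longlonglongrightarrow> (\<integral>y. indicator D y * g (stone_map \<phi> y) \<partial>M)"
    proof (rule conv_integral[OF M Mc hs h0 pc g])
      show "(indicator D :: 'b set \<Rightarrow> real) \<in> borel_measurable M" using D by simp
      show "\<And>y. \<bar>indicator D y :: real\<bar> \<le> 1" by (auto split: split_indicator)
    qed
    then show "(\<lambda>n. signed_integral ?XA (\<nu>s n) g) \<longlonglongrightarrow> signed_integral ?XA \<nu> g"
      unfolding \<nu>s_def \<nu>_def int_eq[OF hs g] int_eq[OF h0 g] .
  qed
  have "weak_conv ?XA \<nu>s \<nu>" using G sr1 sr0 wsc unfolding grothendieck_property_def by blast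
  then have "(\<lambda>n. \<nu>s n B) \<longlonglongrightarrow> \<nu> B"
    unfolding weak_conv_def using eval_functional[OF B] by blast
  moreover have "\<nu>s n B = measure M (stone_map (\<phi>s n) -` B \<inter> D)" for n
    unfolding \<nu>s_def sr_def using B Nm[OF hs B] by simp
  moreover have "\<nu> B = measure M (stone_map \<phi> -` B \<inter> D)"
    unfolding \<nu>_def sr_def using B Nm[OF h0 B] by simp
  ultimately show ?thesis by simp
qed

theorem corollary5p5:
  fixes \<mu> :: "'b::boolean_algebra \<Rightarrow> real"
    and \<mu>_hat :: "'b set measure"
    and \<phi>s :: "nat \<Rightarrow> 'a::boolean_algebra \<Rightarrow> 'b"
    and \<phi> :: "'a \<Rightarrow> 'b"
  assumes "grothendieck_property TYPE('a)"
    and "metric_ba \<mu>"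
    and "radon_extension \<mu> \<mu>_hat"
    and "\<forall>n. ba_hom (\<phi>s n)"
    and "ba_hom \<phi>"
    and "pointwise_metric_conv \<mu> \<phi>s \<phi>"
  shows "pointwise_borel_metric_conv \<mu>_hat \<phi>s \<phi>"
proof -
  let ?XA = "stone_top TYPE('a)" and ?XB = "stone_top TYPE('b)"
  have M: "radon_measure ?XB \<mu>_hat" and Mc: "\<And>b. measure \<mu>_hat (clopen_of b) = \<mu> b"
    using assms(3) by (auto simp: radon_extension_def)
  have hs: "\<And>n. ba_hom (\<phi>s n)" using assms(4) by blast
  have sM: "sets \<mu>_hat = borel_sets ?XB" "space \<mu>_hat = topspace ?XB"
    using M by (auto simp: radon_measure_def)
  interpret finite_measure \<mu>_hat using M by (auto simp: radon_measure_def)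
  have St: "St TYPE('b) = space \<mu>_hat" using sM by (simp add: St_eq topspace_stone)
  show ?thesis unfolding pointwise_borel_metric_conv_def Let_def St
  proof (intro ballI)
    fix B assume B: "B \<in> borel_sets ?XA"
    define Q where "Q = stone_map \<phi> -` B \<inter> space \<mu>_hat"
    define P where "P n = stone_map (\<phi>s n) -` B \<inter> space \<mu>_hat" for n
    have fm: "stone_map \<psi> \<in> measurable \<mu>_hat (borelM ?XA)" if "ba_hom \<psi>" for \<psi> :: "'a \<Rightarrow> 'b"
      by (rule cont_measurable[OF cont_stone_map[OF that] sM])
    have Qs: "Q \<in> sets \<mu>_hat" unfolding Q_def using measurable_sets[OF fm[OF assms(5)]] B by simp
    have Ps: "P n \<in> sets \<mu>_hat" for n unfolding P_def using measurable_sets[OF fm[OF hs]] B by simp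
    have Qc: "space \<mu>_hat - Q \<in> sets \<mu>_hat" using Qs by auto
    have l1: "(\<lambda>n. measure \<mu>_hat (P n \<inter> Q)) \<longlonglongrightarrow> measure \<mu>_hat Q"
    proof -
      have "(\<lambda>n. measure \<mu>_hat (stone_map (\<phi>s n) -` B \<inter> Q)) \<longlonglongrightarrow> measure \<mu>_hat (stone_map \<phi> -` B \<inter> Q)"
        by (rule key_conv[OF assms(1) M Mc hs assms(5,6) Qs B])
      moreover have "stone_map (\<phi>s n) -` B \<inter> Q = P n \<inter> Q" for n unfolding P_def Q_def by auto
      moreover have "stone_map \<phi> -` B \<inter> Q = Q" unfolding Q_def by auto
      ultimately show ?thesis by simp
    qed
    have l2: "(\<lambda>n. measure \<mu>_hat (P n - Q)) \<longlonglongrightarrow> 0"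
    proof -
      have "(\<lambda>n. measure \<mu>_hat (stone_map (\<phi>s n) -` B \<inter> (space \<mu>_hat - Q))) \<longlonglongrightarrow>
          measure \<mu>_hat (stone_map \<phi> -` B \<inter> (space \<mu>_hat - Q))"
        by (rule key_conv[OF assms(1) M Mc hs assms(5,6) Qc B])
      moreover have "stone_map (\<phi>s n) -` B \<inter> (space \<mu>_hat - Q) = P n - Q" for n unfolding P_def Q_def by auto
      moreover have "stone_map \<phi> -` B \<inter> (space \<mu>_hat - Q) = {}" unfolding Q_def by auto
      ultimately show ?thesis by simp
    qed
    have eq: "measure \<mu>_hat ((P n - Q) \<union> (Q - P n)) = measure \<mu>_hat (P n - Q) + (measure \<mu>_hat Q - measure \<mu>_hat (P n \<inter> Q))" for n
    proof -
      have "measure \<mu>_hat ((P n - Q) \<union> (Q - P n)) = measure \<mu>_hat (P n - Q) + measure \<mu>_hat (Q - P n)"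
        using Ps[of n] Qs by (intro finite_measure_Union) auto
      moreover have "measure \<mu>_hat Q = measure \<mu>_hat (P n \<inter> Q) + measure \<mu>_hat (Q - P n)"
      proof -
        have "Q = (P n \<inter> Q) \<union> (Q - P n)" by auto
        then have "measure \<mu>_hat Q = measure \<mu>_hat ((P n \<inter> Q) \<union> (Q - P n))" by simp
        also have "\<dots> = measure \<mu>_hat (P n \<inter> Q) + measure \<mu>_hat (Q - P n)"
          using Ps[of n] Qs by (intro finite_measure_Union) auto
        finally show ?thesis .
      qed
      ultimately show ?thesis by simp
    qed
    have "(\<lambda>n. measure \<mu>_hat (P n - Q) + (measure \<mu>_hat Q - measure \<mu>_hat (P n \<inter> Q))) \<longlonglongrightarrow> 0 + (measure \<mu>_hat Q - measure \<mu>_hat Q)"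
      by (intro tendsto_add tendsto_diff l1 l2 tendsto_const)
    then have "(\<lambda>n. measure \<mu>_hat ((P n - Q) \<union> (Q - P n))) \<longlonglongrightarrow> 0" unfolding eq by simp
    then show "(\<lambda>n. measure \<mu>_hat ((stone_map (\<phi>s n) -` B \<inter> space \<mu>_hat - stone_map \<phi> -` B \<inter> space \<mu>_hat) \<union>
                 (stone_map \<phi> -` B \<inter> space \<mu>_hat - stone_map (\<phi>s n) -` B \<inter> space \<mu>_hat))) \<longlonglongrightarrow> 0"
      unfolding P_def Q_def .
  qed
qed

end
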